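(* Let $G$ be a $(P_6,C_5)$-free graph. If $G$ admits a nice coloring, then $G$ is 4-colorable.
   Context: Graphs are finite and simple. A graph is $(P_6,C_5)$-free if it has no induced 6-vertex path and no induced 5-cycle. A partial 4-coloring of $G$ assigns colors from $\{1,2,3,4\}$ to some of the vertices so that adjacent colored vertices get different colors; the other vertices are uncolored. A partial 4-coloring $c$ is nice if (N1) the set of uncolored vertices is an independent set, and (N2) for every uncolored vertex $y$, letting $U=\{u\in N(y): c(u)\in\{1,2\}\}$ and $W=\{w\in N(y): c(w)\in\{3,4\}\}$, we have $N(y)=U\cup W$ and at least one of $U,W$ is an independent set (possibly empty). *)

theory Defs
  imports Main
begin

definition graph :: "'a set \<Rightarrow> ('a \<Rightarrow> 'a \<Rightarrow> bool) \<Rightarrow> bool" where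
  "graph V E \<longleftrightarrow> finite V \<and> (\<forall>u v. E u v \<longrightarrow> u \<in> V \<and> v \<in> V)
     \<and> (\<forall>u v. E u v \<longrightarrow> E v u) \<and> (\<forall>v. \<not> E v v)"

definition nbhd :: "'a set \<Rightarrow> ('a \<Rightarrow> 'a \<Rightarrow> bool) \<Rightarrow> 'a \<Rightarrow> 'a set" where
  "nbhd V E y = {u \<in> V. E y u}"

definition independent :: "('a \<Rightarrow> 'a \<Rightarrow> bool) \<Rightarrow> 'a set \<Rightarrow> bool" where
  "independent E S \<longleftrightarrow> (\<forall>u\<in>S. \<forall>v\<in>S. \<not> E u v)"

definition has_induced_path :: "'a set \<Rightarrow> ('a \<Rightarrow> 'a \<Rightarrow> bool) \<Rightarrow> nat \<Rightarrow> bool" where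
  "has_induced_path V E n \<longleftrightarrow> (\<exists>p :: nat \<Rightarrow> 'a.
     (\<forall>i<n. p i \<in> V) \<and> inj_on p {..<n} \<and>
     (\<forall>i<n. \<forall>j<n. E (p i) (p j) \<longleftrightarrow> (i = j + 1 \<or> j = i + 1)))"

definition has_induced_cycle :: "'a set \<Rightarrow> ('a \<Rightarrow> 'a \<Rightarrow> bool) \<Rightarrow> nat \<Rightarrow> bool" where
  "has_induced_cycle V E n \<longleftrightarrow> (\<exists>p :: nat \<Rightarrow> 'a.
     (\<forall>i<n. p i \<in> V) \<and> inj_on p {..<n} \<and>
     (\<forall>i<n. \<forall>j<n. E (p i) (p j) \<longleftrightarrow> (i = (j + 1) mod n \<or> j = (i + 1) mod n)))"

definition P6_C5_free :: "'a set \<Rightarrow> ('a \<Rightarrow> 'a \<Rightarrow> bool) \<Rightarrow> bool" where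
  "P6_C5_free V E \<longleftrightarrow> \<not> has_induced_path V E 6 \<and> \<not> has_induced_cycle V E 5"

definition partial_4_coloring :: "'a set \<Rightarrow> ('a \<Rightarrow> 'a \<Rightarrow> bool) \<Rightarrow> ('a \<Rightarrow> nat option) \<Rightarrow> bool" where
  "partial_4_coloring V E c \<longleftrightarrow>
     (\<forall>v\<in>V. c v = None \<or> (\<exists>k\<in>{1,2,3,4}. c v = Some k)) \<and>
     (\<forall>u\<in>V. \<forall>v\<in>V. E u v \<longrightarrow> c u \<noteq> None \<longrightarrow> c v \<noteq> None \<longrightarrow> c u \<noteq> c v)"

definition nice_coloring :: "'a set \<Rightarrow> ('a \<Rightarrow> 'a \<Rightarrow> bool) \<Rightarrow> ('a \<Rightarrow> nat option) \<Rightarrow> bool" where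
  "nice_coloring V E c \<longleftrightarrow> partial_4_coloring V E c \<and>
     independent E {v \<in> V. c v = None} \<and>
     (\<forall>y\<in>V. c y = None \<longrightarrow>
        (let U = {u \<in> nbhd V E y. c u \<in> {Some 1, Some 2}};
             W = {w \<in> nbhd V E y. c w \<in> {Some 3, Some 4}}
         in nbhd V E y = U \<union> W \<and> (independent E U \<or> independent E W)))"

definition k_colorable :: "'a set \<Rightarrow> ('a \<Rightarrow> 'a \<Rightarrow> bool) \<Rightarrow> nat \<Rightarrow> bool" where
  "k_colorable V E k \<longleftrightarrow> (\<exists>f :: 'a \<Rightarrow> nat. (\<forall>v\<in>V. f v \<in> {1..k}) \<and>
     (\<forall>u\<in>V. \<forall>v\<in>V. E u v \<longrightarrow> f u \<noteq> f v))"

end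

theory Submission
  imports Defs
begin

definition walk :: "'a set \<Rightarrow> ('a \<Rightarrow> 'a \<Rightarrow> bool) \<Rightarrow> (nat \<Rightarrow> 'a) \<Rightarrow> nat \<Rightarrow> bool" where
  "walk B E p L \<longleftrightarrow> (\<forall>i\<le>L. p i \<in> B) \<and> (\<forall>i<L. E (p i) (p (Suc i)))"

definition conn :: "'a set \<Rightarrow> ('a \<Rightarrow> 'a \<Rightarrow> bool) \<Rightarrow> 'a \<Rightarrow> 'a \<Rightarrow> bool" where
  "conn B E u v \<longleftrightarrow> (\<exists>p L. walk B E p L \<and> p 0 = u \<and> p L = v)"

lemma conn_refl: "u \<in> B \<Longrightarrow> conn B E u u"
  unfolding conn_def walk_def by (rule exI[of _ "\<lambda>_. u"], rule exI[of _ 0]) auto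

lemma conn_step:
  assumes "conn B E u v" "E v w" "w \<in> B" shows "conn B E u w"
proof -
  obtain p L where w: "walk B E p L" "p 0 = u" "p L = v" using assms(1) unfolding conn_def by blast
  define q where "q = (\<lambda>i. if i \<le> L then p i else w)"
  have "walk B E q (Suc L)" using w assms(2,3) unfolding walk_def q_def
    by (auto simp: less_Suc_eq le_Suc_eq)
  moreover have "q 0 = u" "q (Suc L) = w" using w unfolding q_def by auto
  ultimately show ?thesis unfolding conn_def by blast
qed

lemma walk_sub:
  assumes "walk B E p L" "i \<le> j" "j \<le> L"
  shows "walk B E (\<lambda>k. p (i + k)) (j - i)"
  using assms unfolding walk_def by auto

lemma walk_chord:
  assumes "walk B E p L" "i < j" "j \<le> L" "E (p i) (p j)"
  shows "walk B E (\<lambda>k. if k \<le> i then p k else p (k + (j - i - 1))) (L - (j - i - 1))"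
  unfolding walk_def
proof (intro conjI allI impI)
  fix k assume "k \<le> L - (j - i - 1)"
  then show "(if k \<le> i then p k else p (k + (j - i - 1))) \<in> B"
    using assms unfolding walk_def by auto
next
  fix k assume k: "k < L - (j - i - 1)"
  show "E (if k \<le> i then p k else p (k + (j - i - 1))) (if Suc k \<le> i then p (Suc k) else p (Suc k + (j - i - 1)))"
  proof (cases "k < i")
    case True then show ?thesis using assms k unfolding walk_def by auto
  next
    case False
    show ?thesis
    proof (cases "k = i")
      case True
      then have "Suc k + (j - i - 1) = j" using assms by auto
      then show ?thesis using True assms by auto
    next
      case False
      then have "k > i" using \<open>\<not> k < i\<close> by auto
      then show ?thesis using assms k unfolding walk_def
        by (auto dest!: spec[of _ "k + (j - i - 1)"])
    qed
  qed
qed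

lemma walk_rep:
  assumes "walk B E p L" "i < j" "j \<le> L" "p i = p j"
  shows "walk B E (\<lambda>k. if k \<le> i then p k else p (k + (j - i))) (L - (j - i))"
  unfolding walk_def
proof (intro conjI allI impI)
  fix k assume "k \<le> L - (j - i)"
  then show "(if k \<le> i then p k else p (k + (j - i))) \<in> B"
    using assms unfolding walk_def by auto
next
  fix k assume k: "k < L - (j - i)"
  show "E (if k \<le> i then p k else p (k + (j - i))) (if Suc k \<le> i then p (Suc k) else p (Suc k + (j - i)))"
  proof (cases "k < i")
    case True then show ?thesis using assms k unfolding walk_def by auto
  next
    case False
    show ?thesis
    proof (cases "k = i")
      case True
      then have "Suc k + (j - i) = Suc j" using assms by auto
      then show ?thesis using True assms k unfolding walk_def by auto
    next
      case False
      then have "k > i" using \<open>\<not> k < i\<close> by auto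
      then show ?thesis using assms k unfolding walk_def
        by (auto dest!: spec[of _ "k + (j - i)"])
    qed
  qed
qed

lemma key:
  assumes G: "graph V E" and F: "P6_C5_free V E" and BV: "B \<subseteq> V" and yV: "y \<in> V" and yB: "y \<notin> B"
    and gp: "\<forall>u\<in>B. \<forall>v\<in>B. E u v \<longrightarrow> (g::'a \<Rightarrow> bool) u \<noteq> g v"
    and ind: "\<forall>u\<in>B. \<forall>v\<in>B. E y u \<longrightarrow> E y v \<longrightarrow> \<not> E u v"
  shows "walk B E p L \<Longrightarrow> E y (p 0) \<Longrightarrow> E y (p L) \<Longrightarrow> g (p 0) = g (p L)"
proof (induction L arbitrary: p rule: less_induct)
  case (less L p)
  have sym: "\<And>u v. E u v \<Longrightarrow> E v u" and irr: "\<And>v. \<not> E v v"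
    using G unfolding graph_def by blast+
  have pB: "\<And>k. k \<le> L \<Longrightarrow> p k \<in> B" using less.prems unfolding walk_def by blast
  have pe: "\<And>k. k < L \<Longrightarrow> E (p k) (p (Suc k))" using less.prems unfolding walk_def by blast
  show ?case
  proof (rule ccontr)
    assume ne: "g (p 0) \<noteq> g (p L)"
    have sub: "g (p i) = g (p j)" if "i \<le> j" "j \<le> L" "j - i < L" "E y (p i)" "E y (p j)" for i j
    proof -
      have "walk B E (\<lambda>k. p (i + k)) (j - i)" using walk_sub[OF less.prems(1) that(1,2)] .
      from less.IH[OF that(3) this] that show ?thesis by simp
    qed
    have inter: "\<not> E y (p k)" if "0 < k" "k < L" for k
    proof
      assume "E y (p k)"
      then have "g (p 0) = g (p k)" "g (p k) = g (p L)"
        using sub[of 0 k] sub[of k L] that less.prems by auto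
      with ne show False by simp
    qed
    have nochord: "\<not> E (p i) (p j)" if "Suc i < j" "j \<le> L" for i j
    proof
      assume e: "E (p i) (p j)"
      define q where "q = (\<lambda>k. if k \<le> i then p k else p (k + (j - i - 1)))"
      have w: "walk B E q (L - (j - i - 1))" unfolding q_def using walk_chord[OF less.prems(1) _ that(2) e] that by auto
      have "q 0 = p 0" "q (L - (j - i - 1)) = p L" using that unfolding q_def by auto
      moreover have lt: "L - (j - i - 1) < L" using that by arith
      ultimately show False using less.IH[OF lt w] less.prems ne by simp
    qed
    have norep: "p i \<noteq> p j" if "i < j" "j \<le> L" for i j
    proof
      assume e: "p i = p j"
      define q where "q = (\<lambda>k. if k \<le> i then p k else p (k + (j - i)))"
      have w: "walk B E q (L - (j - i))" unfolding q_def using walk_rep[OF less.prems(1) that(1,2) e] .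
      have "q 0 = p 0" by (simp add: q_def)
      have "q (L - (j - i)) = p L"
      proof (cases "j = L")
        case True then show ?thesis using e that by (simp add: q_def)
      next
        case False
        then have "\<not> (L - (j - i) \<le> i)" "L - (j - i) + (j - i) = L" using that by arith+
        then show ?thesis unfolding q_def by presburger
      qed
      note \<open>q 0 = p 0\<close> this
      moreover have lt: "L - (j - i) < L" using that by arith
      ultimately show False using less.IH[OF lt w] less.prems ne by simp
    qed
    have par: "k \<le> L \<Longrightarrow> g (p k) = (if even k then g (p 0) else \<not> g (p 0))" for k
    proof (induction k)
      case 0 then show ?case by simp
    next
      case (Suc k)
      have "g (p k) \<noteq> g (p (Suc k))" using gp pB pe Suc.prems by auto
      with Suc show ?case by auto
    qed
    have oddL: "odd L" using par[of L] ne by auto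
    have L1: "L \<noteq> 1"
    proof
      assume "L = 1"
      then show False using ind pB[of 0] pB[of 1] pe[of 0] less.prems by auto
    qed
    have padj: "E (p k) (p l) \<longleftrightarrow> (k = l + 1 \<or> l = k + 1)" if "k \<le> L" "l \<le> L" for k l
    proof
      assume "E (p k) (p l)"
      show "k = l + 1 \<or> l = k + 1"
      proof (rule ccontr)
        assume n: "\<not> (k = l + 1 \<or> l = k + 1)"
        then consider "k = l" | "Suc k < l" | "Suc l < k" by arith
        then show False
        proof cases
          case 1 then show False using \<open>E (p k) (p l)\<close> irr by simp
        next
          case 2 then show False using \<open>E (p k) (p l)\<close> nochord[of k l] that by blast
        next
          case 3 then show False using \<open>E (p k) (p l)\<close> nochord[of l k] that sym by blast
        qed
      qed
    next
      assume "k = l + 1 \<or> l = k + 1"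
      then show "E (p k) (p l)" using pe sym that by auto
    qed
    have yp: "E y (p k) \<longleftrightarrow> k = 0" if "k < L" for k
      using inter[of k] that less.prems by auto
    have ysym: "E (p k) y \<longleftrightarrow> E y (p k)" for k using sym by blast
    have pV: "\<And>k. k \<le> L \<Longrightarrow> p k \<in> V" using pB BV by auto
    have ynp: "\<And>k. k \<le> L \<Longrightarrow> p k \<noteq> y" using pB yB by auto
    show False
    proof (cases "L = 3")
      case True
      define q where "q = (\<lambda>i. if i = 0 then y else p (i - 1))"
      have "has_induced_cycle V E 5"
        unfolding has_induced_cycle_def
      proof (intro exI[of _ q] conjI allI impI)
        fix i assume "i < (5::nat)" then show "q i \<in> V" using yV pV True unfolding q_def by auto
      next
        show "inj_on q {..<5}"
        proof (rule inj_onI)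
          fix i j assume a: "i \<in> {..<(5::nat)}" "j \<in> {..<5}" "q i = q j"
          show "i = j"
          proof (rule ccontr)
            assume "i \<noteq> j"
            then consider "i < j" | "j < i" by arith
            then show False
            proof cases
              case 1
              have j1: "j - 1 \<le> L" "j \<noteq> 0" using a 1 True by auto
              show False
              proof (cases "i = 0")
                case True then show False using a j1 ynp[OF j1(1)] unfolding q_def by auto
              next
                case False
                then have "i - 1 < j - 1" using 1 by arith
                then show False using a j1 False norep[of "i - 1" "j - 1"] unfolding q_def by auto
              qed
            next
              case 2
              have j1: "i - 1 \<le> L" "i \<noteq> 0" using a 2 True by auto
              show False
              proof (cases "j = 0")
                case True then show False using a j1 ynp[OF j1(1)] unfolding q_def by auto
              next
                case False
                then have "j - 1 < i - 1" using 2 by arith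
                then show False using a j1 False norep[of "j - 1" "i - 1"] unfolding q_def by auto
              qed
            qed
          qed
        qed
      next
        fix i j :: nat assume "i < 5" "j < 5"
        have ff: "E y (p 0)" "E (p 0) y" "E (p 0) (p 1)" "\<not> E (p 0) (p 2)" "\<not> E (p 0) (p 3)" "\<not> E y (p 1)" "\<not> E (p 1) y" "E (p 1) (p 0)" "E (p 1) (p 2)" "\<not> E (p 1) (p 3)" "\<not> E y (p 2)" "\<not> E (p 2) y" "\<not> E (p 2) (p 0)" "E (p 2) (p 1)" "E (p 2) (p 3)" "E y (p 3)" "E (p 3) y" "\<not> E (p 3) (p 0)" "\<not> E (p 3) (p 1)" "E (p 3) (p 2)"
          using padj yp ysym True less.prems by auto
        from \<open>i < 5\<close> have "i = 0 \<or> i = 1 \<or> i = 2 \<or> i = 3 \<or> i = 4" by arith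
        moreover from \<open>j < 5\<close> have "j = 0 \<or> j = 1 \<or> j = 2 \<or> j = 3 \<or> j = 4" by arith
        ultimately show "E (q i) (q j) = (i = (j + 1) mod 5 \<or> j = (i + 1) mod 5)"
          by (elim disjE) (simp_all add: q_def ff[unfolded One_nat_def] irr)
      qed
      then show False using F unfolding P6_C5_free_def by blast
    next
      case False
      then have L5: "L \<ge> 5" using oddL L1
        by presburger
      define q where "q = (\<lambda>i. if i = 0 then y else p (i - 1))"
      have "has_induced_path V E 6"
        unfolding has_induced_path_def
      proof (intro exI[of _ q] conjI allI impI)
        fix i assume "i < (6::nat)" then show "q i \<in> V" using yV pV L5 unfolding q_def by auto
      next
        show "inj_on q {..<6}"
        proof (rule inj_onI)
          fix i j assume a: "i \<in> {..<(6::nat)}" "j \<in> {..<6}" "q i = q j"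
          show "i = j"
          proof (rule ccontr)
            assume "i \<noteq> j"
            then consider "i < j" | "j < i" by arith
            then show False
            proof cases
              case 1
              have j1: "j - 1 \<le> L" "j \<noteq> 0" using a 1 L5 by auto
              show False
              proof (cases "i = 0")
                case True then show False using a j1 ynp[OF j1(1)] unfolding q_def by auto
              next
                case False
                then have "i - 1 < j - 1" using 1 by arith
                then show False using a j1 False norep[of "i - 1" "j - 1"] unfolding q_def by auto
              qed
            next
              case 2
              have j1: "i - 1 \<le> L" "i \<noteq> 0" using a 2 L5 by auto
              show False
              proof (cases "j = 0")
                case True then show False using a j1 ynp[OF j1(1)] unfolding q_def by auto
              next
                case False
                then have "j - 1 < i - 1" using 2 by arith
                then show False using a j1 False norep[of "j - 1" "i - 1"] unfolding q_def by auto
              qed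
            qed
          qed
        qed
      next
        fix i j :: nat assume "i < 6" "j < 6"
        have ff: "E y (p 0)" "E (p 0) y" "E (p 0) (p 1)" "\<not> E (p 0) (p 2)" "\<not> E (p 0) (p 3)" "\<not> E (p 0) (p 4)" "\<not> E y (p 1)" "\<not> E (p 1) y" "E (p 1) (p 0)" "E (p 1) (p 2)" "\<not> E (p 1) (p 3)" "\<not> E (p 1) (p 4)" "\<not> E y (p 2)" "\<not> E (p 2) y" "\<not> E (p 2) (p 0)" "E (p 2) (p 1)" "E (p 2) (p 3)" "\<not> E (p 2) (p 4)" "\<not> E y (p 3)" "\<not> E (p 3) y" "\<not> E (p 3) (p 0)" "\<not> E (p 3) (p 1)" "E (p 3) (p 2)" "E (p 3) (p 4)" "\<not> E y (p 4)" "\<not> E (p 4) y" "\<not> E (p 4) (p 0)" "\<not> E (p 4) (p 1)" "\<not> E (p 4) (p 2)" "E (p 4) (p 3)"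
          using padj yp ysym L5 by auto
        from \<open>i < 6\<close> have "i = 0 \<or> i = 1 \<or> i = 2 \<or> i = 3 \<or> i = 4 \<or> i = 5" by arith
        moreover from \<open>j < 6\<close> have "j = 0 \<or> j = 1 \<or> j = 2 \<or> j = 3 \<or> j = 4 \<or> j = 5" by arith
        ultimately show "E (q i) (q j) = (i = j + 1 \<or> j = i + 1)"
          by (elim disjE) (simp_all add: q_def ff[unfolded One_nat_def] irr)
      qed
      then show False using F unfolding P6_C5_free_def by blast
    qed
  qed
qed


lemma ext:
  assumes G: "graph V E" and F: "P6_C5_free V E" and BV: "B \<subseteq> V" and yV: "y \<in> V" and yB: "y \<notin> B"
    and gp: "\<forall>u\<in>B. \<forall>v\<in>B. E u v \<longrightarrow> (g::'a \<Rightarrow> bool) u \<noteq> g v"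
    and ind: "\<forall>u\<in>B. \<forall>v\<in>B. E y u \<longrightarrow> E y v \<longrightarrow> \<not> E u v"
  shows "\<exists>h::'a \<Rightarrow> bool. \<forall>u\<in>insert y B. \<forall>v\<in>insert y B. E u v \<longrightarrow> h u \<noteq> h v"
proof -
  have sym: "\<And>u v. E u v \<Longrightarrow> E v u" and irr: "\<And>v. \<not> E v v"
    using G unfolding graph_def by blast+
  define N where "N = {u \<in> B. E y u}"
  have kc: "g n1 = g n2" if a: "n1 \<in> N" "n2 \<in> N" "conn B E n1 n2" for n1 n2
  proof -
    obtain p L where "walk B E p L" "p 0 = n1" "p L = n2" using a(3) unfolding conn_def by blast
    then show ?thesis using key[OF G F BV yV yB gp ind, of p L] a unfolding N_def by auto
  qed
  define h where "h = (\<lambda>v. if v = y then True else (g v \<noteq> (\<exists>n\<in>N. g n \<and> conn B E n v)))"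
  have cc: "(\<exists>n\<in>N. g n \<and> conn B E n u) = (\<exists>n\<in>N. g n \<and> conn B E n v)"
    if "u \<in> B" "v \<in> B" "E u v" for u v
    using conn_step[of B E _ u v] conn_step[of B E _ v u] that sym by blast
  have hN: "h n = False" if "n \<in> N" for n
  proof -
    have nB: "n \<in> B" "n \<noteq> y" using that yB unfolding N_def by auto
    show ?thesis
    proof (cases "g n")
      case True then show ?thesis using conn_refl[OF nB(1), of E] that nB unfolding h_def by auto
    next
      case False
      have "\<not> (\<exists>n'\<in>N. g n' \<and> conn B E n' n)" using kc[OF _ that] False by blast
      then show ?thesis using False nB unfolding h_def by auto
    qed
  qed
  have hy: "h y = True" unfolding h_def by simp
  show ?thesis
  proof (intro exI[of _ h] ballI impI)
    fix u v assume u: "u \<in> insert y B" and v: "v \<in> insert y B" and e: "E u v"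
    show "h u \<noteq> h v"
    proof (cases "u = y")
      case True
      then have "v \<in> N" "v \<noteq> y" using v e irr unfolding N_def by auto
      then show ?thesis using hN hy True by auto
    next
      case uy: False
      show ?thesis
      proof (cases "v = y")
        case True
        then have "u \<in> N" using u e irr sym unfolding N_def by auto
        then show ?thesis using hN hy True by auto
      next
        case False
        then have "u \<in> B" "v \<in> B" using u v uy by auto
        then show ?thesis using cc[of u v] gp e uy False unfolding h_def by auto
      qed
    qed
  qed
qed

lemma two_col:
  assumes G: "graph V E" and F: "P6_C5_free V E" and fin: "finite Y" and AV: "A \<subseteq> V" and YV: "Y \<subseteq> V"
    and dis: "A \<inter> Y = {}" and Yi: "\<forall>y\<in>Y. \<forall>y'\<in>Y. \<not> E y y'"
    and Ni: "\<forall>y\<in>Y. \<forall>u\<in>A. \<forall>v\<in>A. E y u \<longrightarrow> E y v \<longrightarrow> \<not> E u v"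
    and fp: "\<forall>u\<in>A. \<forall>v\<in>A. E u v \<longrightarrow> (f::'a \<Rightarrow> bool) u \<noteq> f v"
  shows "\<exists>g::'a \<Rightarrow> bool. \<forall>u\<in>A \<union> Y. \<forall>v\<in>A \<union> Y. E u v \<longrightarrow> g u \<noteq> g v"
  using fin YV dis Yi Ni
proof (induction Y rule: finite_induct)
  case empty then show ?case using fp by auto
next
  case (insert y Y)
  have "\<exists>g::'a \<Rightarrow> bool. \<forall>u\<in>A \<union> Y. \<forall>v\<in>A \<union> Y. E u v \<longrightarrow> g u \<noteq> g v"
  proof (rule insert.IH)
    show "Y \<subseteq> V" "A \<inter> Y = {}" using insert.prems(1,2) by auto
    show "\<forall>y\<in>Y. \<forall>y'\<in>Y. \<not> E y y'" using insert.prems(3) by blast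
    show "\<forall>y\<in>Y. \<forall>u\<in>A. \<forall>v\<in>A. E y u \<longrightarrow> E y v \<longrightarrow> \<not> E u v" using insert.prems(4) by blast
  qed
  then obtain g :: "'a \<Rightarrow> bool" where g: "\<forall>u\<in>A \<union> Y. \<forall>v\<in>A \<union> Y. E u v \<longrightarrow> g u \<noteq> g v" by blast
  have ind: "\<forall>u\<in>A \<union> Y. \<forall>v\<in>A \<union> Y. E y u \<longrightarrow> E y v \<longrightarrow> \<not> E u v"
  proof (intro ballI impI)
    fix u v assume u: "u \<in> A \<union> Y" and v: "v \<in> A \<union> Y" and eu: "E y u" and ev: "E y v"
    have "u \<in> A" using u eu insert.prems(3) by blast
    moreover have "v \<in> A" using v ev insert.prems(3) by blast
    ultimately show "\<not> E u v" using eu ev insert.prems(4) by blast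
  qed
  have AY: "A \<union> Y \<subseteq> V" "y \<in> V" "y \<notin> A \<union> Y" using AV insert.prems(1,2) insert.hyps(2) by auto
  obtain h :: "'a \<Rightarrow> bool" where "\<forall>u\<in>insert y (A \<union> Y). \<forall>v\<in>insert y (A \<union> Y). E u v \<longrightarrow> h u \<noteq> h v"
    using ext[OF G F AY g ind] by blast
  then show ?case by auto
qed

theorem lemma4:
  fixes V :: "'a set" and E :: "'a \<Rightarrow> 'a \<Rightarrow> bool"
  assumes "graph V E"
    and "P6_C5_free V E"
    and "\<exists>c. nice_coloring V E c"
  shows "k_colorable V E 4"
proof -
  obtain c where c: "nice_coloring V E c" using assms(3) by blast
  have G: "graph V E" and F: "P6_C5_free V E" by fact+
  have finV: "finite V" using G unfolding graph_def by blast
  have EV: "\<And>u v. E u v \<Longrightarrow> u \<in> V \<and> v \<in> V" using G unfolding graph_def by blast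
  have pc: "partial_4_coloring V E c" and Yind: "independent E {v \<in> V. c v = None}"
    and nice: "\<forall>y\<in>V. c y = None \<longrightarrow>
        (let U = {u \<in> nbhd V E y. c u \<in> {Some 1, Some 2}};
             W = {w \<in> nbhd V E y. c w \<in> {Some 3, Some 4}}
         in nbhd V E y = U \<union> W \<and> (independent E U \<or> independent E W))"
    using c unfolding nice_coloring_def by blast+
  have vals: "\<And>v. v \<in> V \<Longrightarrow> c v = None \<or> c v = Some 1 \<or> c v = Some 2 \<or> c v = Some 3 \<or> c v = Some 4"
    using pc unfolding partial_4_coloring_def by auto
  have cp: "\<And>u v. u \<in> V \<Longrightarrow> v \<in> V \<Longrightarrow> E u v \<Longrightarrow> c u \<noteq> None \<Longrightarrow> c v \<noteq> None \<Longrightarrow> c u \<noteq> c v"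
    using pc unfolding partial_4_coloring_def by blast
  define A where "A = {v \<in> V. c v \<in> {Some 1, Some 2}}"
  define C where "C = {v \<in> V. c v \<in> {Some 3, Some 4}}"
  define Y1 where "Y1 = {y \<in> V. c y = None \<and> independent E {u \<in> nbhd V E y. c u \<in> {Some 1, Some 2}}}"
  define Y2 where "Y2 = {y \<in> V. c y = None \<and> \<not> independent E {u \<in> nbhd V E y. c u \<in> {Some 1, Some 2}}}"
  have Y2W: "independent E {u \<in> nbhd V E y. c u \<in> {Some 3, Some 4}}" if "y \<in> Y2" for y
    using nice that unfolding Y2_def Let_def by auto
  obtain g1 :: "'a \<Rightarrow> bool" where g1: "\<forall>u\<in>A \<union> Y1. \<forall>v\<in>A \<union> Y1. E u v \<longrightarrow> g1 u \<noteq> g1 v"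
  proof -
    have "\<exists>g::'a \<Rightarrow> bool. \<forall>u\<in>A \<union> Y1. \<forall>v\<in>A \<union> Y1. E u v \<longrightarrow> g u \<noteq> g v"
    proof (rule two_col[OF G F, where f = "\<lambda>v. c v = Some 1"])
      show "finite Y1" using finV unfolding Y1_def by auto
      show "A \<subseteq> V" "Y1 \<subseteq> V" "A \<inter> Y1 = {}" unfolding A_def Y1_def by auto
      show "\<forall>y\<in>Y1. \<forall>y'\<in>Y1. \<not> E y y'" using Yind unfolding Y1_def independent_def by auto
      show "\<forall>y\<in>Y1. \<forall>u\<in>A. \<forall>v\<in>A. E y u \<longrightarrow> E y v \<longrightarrow> \<not> E u v"
        unfolding Y1_def A_def independent_def nbhd_def by auto
      show "\<forall>u\<in>A. \<forall>v\<in>A. E u v \<longrightarrow> (c u = Some 1) \<noteq> (c v = Some 1)"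
        unfolding A_def using cp by fastforce
    qed
    then show ?thesis using that by blast
  qed
  obtain g2 :: "'a \<Rightarrow> bool" where g2: "\<forall>u\<in>C \<union> Y2. \<forall>v\<in>C \<union> Y2. E u v \<longrightarrow> g2 u \<noteq> g2 v"
  proof -
    have "\<exists>g::'a \<Rightarrow> bool. \<forall>u\<in>C \<union> Y2. \<forall>v\<in>C \<union> Y2. E u v \<longrightarrow> g u \<noteq> g v"
    proof (rule two_col[OF G F, where f = "\<lambda>v. c v = Some 3"])
      show "finite Y2" using finV unfolding Y2_def by auto
      show "C \<subseteq> V" "Y2 \<subseteq> V" "C \<inter> Y2 = {}" unfolding C_def Y2_def by auto
      show "\<forall>y\<in>Y2. \<forall>y'\<in>Y2. \<not> E y y'" using Yind unfolding Y2_def independent_def by auto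
      show "\<forall>y\<in>Y2. \<forall>u\<in>C. \<forall>v\<in>C. E y u \<longrightarrow> E y v \<longrightarrow> \<not> E u v"
        using Y2W unfolding C_def independent_def nbhd_def by auto
      show "\<forall>u\<in>C. \<forall>v\<in>C. E u v \<longrightarrow> (c u = Some 3) \<noteq> (c v = Some 3)"
        unfolding C_def using cp by fastforce
    qed
    then show ?thesis using that by blast
  qed
  define h where "h = (\<lambda>v. if v \<in> A \<union> Y1 then (if g1 v then 1 else 2) else (if g2 v then 3 else (4::nat)))"
  have cover: "\<And>v. v \<in> V \<Longrightarrow> v \<notin> A \<union> Y1 \<Longrightarrow> v \<in> C \<union> Y2"
    using vals unfolding A_def Y1_def C_def Y2_def by fastforce
  show ?thesis unfolding k_colorable_def
  proof (intro exI[of _ h] conjI ballI impI)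
    fix v assume "v \<in> V" then show "h v \<in> {1..4}" unfolding h_def by auto
  next
    fix u v assume u: "u \<in> V" and v: "v \<in> V" and e: "E u v"
    show "h u \<noteq> h v"
      using g1 g2 cover[OF u] cover[OF v] e unfolding h_def
      by (cases "u \<in> A \<union> Y1"; cases "v \<in> A \<union> Y1") auto
  qed
qed

end
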